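(* Let $\mathcal R$ be a semi-finite CCTRS and $s\in\mathcal T(\mathcal F,\mathcal V)$. Then $s$ is not quasi-decreasing if and only if $\mathrm{label}(s)\rightharpoonup^\infty$.
   Context: Terms are built from a signature $\mathcal F$ and variables $\mathcal V$. An (oriented) conditional rewrite rule has the form $\ell\to r\Leftarrow a_1\approx b_1,\dots,a_k\approx b_k$ with $k\ge0$; $s\to_{\mathcal R}t$ iff there are a position $p$, a rule and a substitution $\sigma$ with $s|_p=\ell\sigma$, $t=s[r\sigma]_p$ and $a_j\sigma\to_{\mathcal R}^*b_j\sigma$ for all $j$ (formally the union of the usual approximations $\to_{\mathcal R_i}$). Defined symbols are root symbols of left-hand sides, others are constructors; constructor terms contain only constructors and variables. $\mathcal R{\restriction}f$ is the set of rules whose left-hand side has root $f$; $\mathcal R$ is semi-finite if each $\mathcal R{\restriction}f$ is finite. A CCTRS is a set $\mathcal R$ of rules each of the form $f(\ell_1,\dots,\ell_n)\to r\Leftarrow a_1\approx b_1,\dots,a_k\approx b_k$ where $\ell_1,\dots,\ell_n,b_1,\dots,b_k$ are constructor terms, the terms $f(\ell_1,\dots,\ell_n),b_1,\dots,b_k$ pairwise have no common variables, $\mathrm{Var}(r)\subseteq\mathrm{Var}(\ell_1,\dots,\ell_n,b_1,\dots,b_k)$ and $\mathrm{Var}(a_i)\subseteq\mathrm{Var}(\ell_1,\dots,\ell_n,b_1,\dots,b_{i-1})$. Write $s\sqsupset t$ if there are a position $p$, a rule $\ell\to r\Leftarrow a_1\approx b_1,\dots,a_k\approx b_k$, a substitution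 $\sigma$ and $1\le i\le k$ with $s|_p=\ell\sigma$, $a_j\sigma\to^* b_j\sigma$ for $1\le j<i$, and $t=a_i\sigma$. A term $s$ is quasi-decreasing if there is no infinite sequence $s=u_0\,(\to\cup\sqsupset)\,u_1\,(\to\cup\sqsupset)\cdots$. Labeled terms: the labeled signature $\mathcal G$ consists of the constructors of $\mathcal F$ together with a symbol $f_R$ (same arity as $f$) for every defined $f$ and every $R\subseteq\mathcal R{\restriction}f$. $\mathrm{label}(t)$ replaces every defined $f$ by $f_{\mathcal R\restriction f}$; $\mathrm{erase}$ removes all labels. A labeled normal form is a term built only from constructors, symbols $f_\emptyset$, and variables. The labeled step relation $\rightharpoonup$ is defined inductively: $s\rightharpoonup t$ if either (i) there are a position $p$ and a rule $\rho\colon\ell\to r\Leftarrow c$ with $s|_p=f_R(s_1,\dots,s_n)$, $\rho\in R$, $t=s[f_{R\setminus\{\rho\}}(s_1,\dots,s_n)]_p$, and linear labeled normal forms $u_1,\dots,u_n$ on fresh variables and $\sigma$ with $s|_p=f_R(u_1,\dots,u_n)\sigma$ and $f(\mathrm{erase}(u_1),\dots,\mathrm{erase}(u_n))$ not unifiable with $\ell$; or (ii) there are $p$, a rule $\rho\colon f(\ell_1,\dots,\ell_n)\to r\Leftarrow a_1\approx b_1,\dots,a_k\approx b_k$, $\sigma$ and $0\le j\le k$ with $s|_p=f_R(\ell_1\sigma,\dots,\ell_n\sigma)$, $\rho\in R$, $\mathrm{label}(a_i)\sigma\rightharpoonup^*b_i\sigma$ for $1\le i\le j$, and either $j=k$ and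 $t=s[\mathrm{label}(r)\sigma]_p$, or $j<k$, $\mathrm{label}(a_{j+1})\sigma\rightharpoonup^*u\tau$ for some linear labeled normal form $u$ with $\mathrm{erase}(u)$ not unifiable with $b_{j+1}$ and some $\tau$, and $t=s[f_{R\setminus\{\rho\}}(\ell_1\sigma,\dots,\ell_n\sigma)]_p$. Further $s\rightharpoonup_\rhd t$ if there are a position $p$, a rule $\rho$ as in (ii), $\sigma$ and $0\le j<k$ with $s|_p=f_R(\ell_1\sigma,\dots,\ell_n\sigma)$, $\rho\in R$, $\mathrm{label}(a_i)\sigma\rightharpoonup^*b_i\sigma$ for $1\le i\le j$, and $t=\mathrm{label}(a_{j+1})\sigma$. $s\rightharpoonup^\infty$ means there is an infinite sequence $s=s_0\,(\rightharpoonup\cup\rightharpoonup_\rhd)\,s_1\,(\rightharpoonup\cup\rightharpoonup_\rhd)\cdots$. *)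

theory Defs
  imports Main
begin

datatype ('f, 'v) "term" = Var 'v | Fun 'f "('f, 'v) term list"

type_synonym pos = "nat list"

inductive is_pos :: "('f, 'v) term \<Rightarrow> pos \<Rightarrow> bool" where
  root_pos: "is_pos t []"
| arg_pos: "i < length ts \<Longrightarrow> is_pos (ts ! i) p \<Longrightarrow> is_pos (Fun f ts) (i # p)"

definition poss :: "('f, 'v) term \<Rightarrow> pos set" where
  "poss t = {p. is_pos t p}"

fun subt_at :: "('f, 'v) term \<Rightarrow> pos \<Rightarrow> ('f, 'v) term" where
  "subt_at t [] = t"
| "subt_at (Fun f ts) (i # p) = subt_at (ts ! i) p"
| "subt_at (Var x) (i # p) = Var x"

fun replace_at :: "('f, 'v) term \<Rightarrow> pos \<Rightarrow> ('f, 'v) term \<Rightarrow> ('f, 'v) term" where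
  "replace_at t [] u = u"
| "replace_at (Fun f ts) (i # p) u = Fun f (ts[i := replace_at (ts ! i) p u])"
| "replace_at (Var x) (i # p) u = Var x"

fun subst :: "('v \<Rightarrow> ('f, 'v) term) \<Rightarrow> ('f, 'v) term \<Rightarrow> ('f, 'v) term" where
  "subst \<sigma> (Var x) = \<sigma> x"
| "subst \<sigma> (Fun f ts) = Fun f (map (subst \<sigma>) ts)"

fun vars_list :: "('f, 'v) term \<Rightarrow> 'v list" where
  "vars_list (Var x) = [x]"
| "vars_list (Fun f ts) = concat (map vars_list ts)"

definition vars :: "('f, 'v) term \<Rightarrow> 'v set" where
  "vars t = set (vars_list t)"

fun funs_list :: "('f, 'v) term \<Rightarrow> 'f list" where
  "funs_list (Var x) = []"
| "funs_list (Fun f ts) = f # concat (map funs_list ts)"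

definition funs :: "('f, 'v) term \<Rightarrow> 'f set" where
  "funs t = set (funs_list t)"

fun root :: "('f, 'v) term \<Rightarrow> 'f option" where
  "root (Var x) = None"
| "root (Fun f ts) = Some f"

definition linear_list :: "('f, 'v) term list \<Rightarrow> bool" where
  "linear_list ts = distinct (concat (map vars_list ts))"

definition linear :: "('f, 'v) term \<Rightarrow> bool" where
  "linear t = distinct (vars_list t)"

text \<open>Unifiability of two terms after renaming them apart (the terms are
  considered on disjoint (fresh) variables), hence two independent substitutions.\<close>
definition unifiable_apart :: "('f, 'v) term \<Rightarrow> ('f, 'v) term \<Rightarrow> bool" where
  "unifiable_apart s t = (\<exists>\<sigma> \<tau>. subst \<sigma> s = subst \<tau> t)"

text \<open>A rule  l \<rightarrow> r \<Leftarrow> a1 \<approx> b1, ..., ak \<approx> bk  is a triple (l, r, [(a1,b1),...,(ak,bk)]).\<close>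
type_synonym ('f, 'v) crule = "('f, 'v) term \<times> ('f, 'v) term \<times> (('f, 'v) term \<times> ('f, 'v) term) list"

definition defined :: "('f, 'v) crule set \<Rightarrow> 'f \<Rightarrow> bool" where
  "defined R f = (\<exists>\<rho> \<in> R. root (fst \<rho>) = Some f)"

definition rules_of :: "('f, 'v) crule set \<Rightarrow> 'f \<Rightarrow> ('f, 'v) crule set" where
  "rules_of R f = {\<rho> \<in> R. root (fst \<rho>) = Some f}"

definition constructor_term :: "('f, 'v) crule set \<Rightarrow> ('f, 'v) term \<Rightarrow> bool" where
  "constructor_term R t = (\<forall>f \<in> funs t. \<not> defined R f)"

definition semi_finite :: "('f, 'v) crule set \<Rightarrow> bool" where
  "semi_finite R = (\<forall>f. finite (rules_of R f))"

definition cctrs :: "('f, 'v) crule set \<Rightarrow> bool" where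
  "cctrs R = (\<forall>(l, r, cs) \<in> R.
     (\<exists>f ls. l = Fun f ls \<and> (\<forall>li \<in> set ls. constructor_term R li)) \<and>
     (\<forall>(a, b) \<in> set cs. constructor_term R b) \<and>
     (let ts = l # map snd cs in
        \<forall>i < length ts. \<forall>j < length ts. i \<noteq> j \<longrightarrow> vars (ts ! i) \<inter> vars (ts ! j) = {}) \<and>
     vars r \<subseteq> vars l \<union> (\<Union>(a, b) \<in> set cs. vars b) \<and>
     (\<forall>i < length cs. vars (fst (cs ! i)) \<subseteq> vars l \<union> (\<Union>j < i. vars (snd (cs ! j)))))"

text \<open>Conditional rewrite relation (least fixed point = union of the approximations).\<close>
inductive cstep :: "('f, 'v) crule set \<Rightarrow> ('f, 'v) term \<Rightarrow> ('f, 'v) term \<Rightarrow> bool"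
  for R :: "('f, 'v) crule set" where
  "p \<in> poss s \<Longrightarrow> (l, r, cs) \<in> R \<Longrightarrow> subt_at s p = subst \<sigma> l \<Longrightarrow>
   (\<forall>i < length cs. (cstep R)\<^sup>*\<^sup>* (subst \<sigma> (fst (cs ! i))) (subst \<sigma> (snd (cs ! i)))) \<Longrightarrow>
   cstep R s (replace_at s p (subst \<sigma> r))"

text \<open>The relation s \<sqsupset> t (condition indices are 0-based here).\<close>
definition cond_sub :: "('f, 'v) crule set \<Rightarrow> ('f, 'v) term \<Rightarrow> ('f, 'v) term \<Rightarrow> bool" where
  "cond_sub R s t = (\<exists>p l r cs \<sigma> i. p \<in> poss s \<and> (l, r, cs) \<in> R \<and> subt_at s p = subst \<sigma> l \<and>
     i < length cs \<and>
     (\<forall>j < i. (cstep R)\<^sup>*\<^sup>* (subst \<sigma> (fst (cs ! j))) (subst \<sigma> (snd (cs ! j)))) \<and>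
     t = subst \<sigma> (fst (cs ! i)))"

definition infinite_seq_from :: "('a \<Rightarrow> 'a \<Rightarrow> bool) \<Rightarrow> 'a \<Rightarrow> bool" where
  "infinite_seq_from S s = (\<exists>u :: nat \<Rightarrow> 'a. u 0 = s \<and> (\<forall>i. S (u i) (u (Suc i))))"

definition quasi_decreasing :: "('f, 'v) crule set \<Rightarrow> ('f, 'v) term \<Rightarrow> bool" where
  "quasi_decreasing R s = (\<not> infinite_seq_from (\<lambda>x y. cstep R x y \<or> cond_sub R x y) s)"

text \<open>Labeled symbols: (c, None) for a constructor c, (f, Some Q) for f_Q with Q a set of rules.\<close>
type_synonym ('f, 'v) lterm = "('f \<times> ('f, 'v) crule set option, 'v) term"

fun label :: "('f, 'v) crule set \<Rightarrow> ('f, 'v) term \<Rightarrow> ('f, 'v) lterm" where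
  "label R (Var x) = Var x"
| "label R (Fun f ts) = Fun (f, if defined R f then Some (rules_of R f) else None) (map (label R) ts)"

fun erase :: "('f \<times> 'l, 'v) term \<Rightarrow> ('f, 'v) term" where
  "erase (Var x) = Var x"
| "erase (Fun g ts) = Fun (fst g) (map erase ts)"

definition lnf :: "('f, 'v) crule set \<Rightarrow> ('f, 'v) lterm \<Rightarrow> bool" where
  "lnf R u = (\<forall>(g, lab) \<in> funs u. (\<not> defined R g \<and> lab = None) \<or> (defined R g \<and> lab = Some {}))"

text \<open>The labeled step relation (condition indices 0-based).\<close>
inductive lstep :: "('f, 'v) crule set \<Rightarrow> ('f, 'v) lterm \<Rightarrow> ('f, 'v) lterm \<Rightarrow> bool"
  for R :: "('f, 'v) crule set" where
  remove_nonunif: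
  "p \<in> poss s \<Longrightarrow> subt_at s p = Fun (f, Some Q) ss \<Longrightarrow> \<rho> \<in> Q \<Longrightarrow> \<rho> = (l, r, cs) \<Longrightarrow>
   length us = length ss \<Longrightarrow> (\<forall>u \<in> set us. lnf R u) \<Longrightarrow> linear_list us \<Longrightarrow>
   ss = map (subst \<sigma>) us \<Longrightarrow>
   \<not> unifiable_apart (Fun f (map erase us)) l \<Longrightarrow>
   t = replace_at s p (Fun (f, Some (Q - {\<rho>})) ss) \<Longrightarrow>
   lstep R s t"
| apply_rule:
  "p \<in> poss s \<Longrightarrow> \<rho> \<in> Q \<Longrightarrow> \<rho> = (Fun f ls, r, cs) \<Longrightarrow>
   subt_at s p = Fun (f, Some Q) (map (\<lambda>li. subst \<sigma> (label R li)) ls) \<Longrightarrow>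
   (\<forall>i < length cs. (lstep R)\<^sup>*\<^sup>* (subst \<sigma> (label R (fst (cs ! i)))) (subst \<sigma> (label R (snd (cs ! i))))) \<Longrightarrow>
   t = replace_at s p (subst \<sigma> (label R r)) \<Longrightarrow>
   lstep R s t"
| remove_failed_cond:
  "p \<in> poss s \<Longrightarrow> \<rho> \<in> Q \<Longrightarrow> \<rho> = (Fun f ls, r, cs) \<Longrightarrow>
   subt_at s p = Fun (f, Some Q) (map (\<lambda>li. subst \<sigma> (label R li)) ls) \<Longrightarrow>
   j < length cs \<Longrightarrow>
   (\<forall>i < j. (lstep R)\<^sup>*\<^sup>* (subst \<sigma> (label R (fst (cs ! i)))) (subst \<sigma> (label R (snd (cs ! i))))) \<Longrightarrow>
   (lstep R)\<^sup>*\<^sup>* (subst \<sigma> (label R (fst (cs ! j)))) (subst \<tau> u) \<Longrightarrow>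
   linear u \<Longrightarrow> lnf R u \<Longrightarrow> \<not> unifiable_apart (erase u) (snd (cs ! j)) \<Longrightarrow>
   t = replace_at s p (Fun (f, Some (Q - {\<rho>})) (map (\<lambda>li. subst \<sigma> (label R li)) ls)) \<Longrightarrow>
   lstep R s t"

definition lstep_cond :: "('f, 'v) crule set \<Rightarrow> ('f, 'v) lterm \<Rightarrow> ('f, 'v) lterm \<Rightarrow> bool" where
  "lstep_cond R s t = (\<exists>p \<rho> Q f ls r cs \<sigma> j. p \<in> poss s \<and> \<rho> \<in> Q \<and> \<rho> = (Fun f ls, r, cs) \<and>
     subt_at s p = Fun (f, Some Q) (map (\<lambda>li. subst \<sigma> (label R li)) ls) \<and>
     j < length cs \<and>
     (\<forall>i < j. (lstep R)\<^sup>*\<^sup>* (subst \<sigma> (label R (fst (cs ! i)))) (subst \<sigma> (label R (snd (cs ! i))))) \<and>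
     t = subst \<sigma> (label R (fst (cs ! j))))"

definition lstep_inf :: "('f, 'v) crule set \<Rightarrow> ('f, 'v) lterm \<Rightarrow> bool" where
  "lstep_inf R s = infinite_seq_from (\<lambda>x y. lstep R x y \<or> lstep_cond R x y) s"

end

theory Submission
  imports Defs
begin

lemma funs_Var[simp]: "funs (Var x) = {}" by (simp add: funs_def)
lemma funs_Fun[simp]: "funs (Fun f ts) = insert f (\<Union>t\<in>set ts. funs t)"
  by (simp add: funs_def)
lemma vars_Var[simp]: "vars (Var x) = {x}" by (simp add: vars_def)
lemma vars_Fun[simp]: "vars (Fun f ts) = (\<Union>t\<in>set ts. vars t)"
  by (simp add: vars_def)

definition good :: "('f, 'v) crule set \<Rightarrow> ('f, 'v) lterm \<Rightarrow> bool" where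
  "good R t = (\<forall>g Q. (g, Some Q) \<in> funs t \<longrightarrow> Q \<subseteq> R \<and> finite Q)"

lemma good_Var[simp]: "good R (Var x)" by (simp add: good_def)
lemma good_Fun[simp]: "good R (Fun (g, lab) ts) \<longleftrightarrow>
   (\<forall>Q. lab = Some Q \<longrightarrow> Q \<subseteq> R \<and> finite Q) \<and> (\<forall>t\<in>set ts. good R t)"
  unfolding good_def by (auto; blast)

lemma good_subst: "good R (subst \<sigma> t) \<longleftrightarrow> good R t \<and> (\<forall>x\<in>vars t. good R (\<sigma> x))"
proof (induction t)
  case (Var x) then show ?case by simp
next
  case (Fun g ts)
  obtain g1 g2 where "g = (g1, g2)" by fastforce
  with Fun show ?case by auto
qed

lemma good_label: "semi_finite R \<Longrightarrow> good R (label R t)"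
  by (induction t) (auto simp: semi_finite_def rules_of_def)

lemma vars_label[simp]: "vars (label R t) = vars t"
  by (induction t) auto

lemma erase_label[simp]: "erase (label R t) = t"
  by (induction t) (auto simp: map_idI)

lemma erase_subst: "erase (subst \<sigma> t) = subst (erase \<circ> \<sigma>) (erase t)"
  by (induction t) auto

lemma label_subst: "label R (subst \<sigma> t) = subst (label R \<circ> \<sigma>) (label R t)"
  by (induction t) auto

lemma poss_label: "is_pos s p \<Longrightarrow> is_pos (label R s) p"
  by (induction rule: is_pos.induct) (auto intro: is_pos.intros)

lemma subt_label: "is_pos s p \<Longrightarrow> subt_at (label R s) p = label R (subt_at s p)"
  by (induction rule: is_pos.induct) auto

lemma replace_label: "is_pos s p \<Longrightarrow> label R (replace_at s p u) = replace_at (label R s) p (label R u)"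
  by (induction rule: is_pos.induct) (auto simp: map_update)

lemma poss_erase: "is_pos s p \<Longrightarrow> is_pos (erase s) p"
  by (induction rule: is_pos.induct) (auto intro: is_pos.intros)

lemma subt_erase: "is_pos s p \<Longrightarrow> subt_at (erase s) p = erase (subt_at s p)"
  by (induction rule: is_pos.induct) auto

lemma replace_erase: "is_pos s p \<Longrightarrow> erase (replace_at s p u) = replace_at (erase s) p (erase u)"
  by (induction rule: is_pos.induct) (auto simp: map_update)

lemma replace_subt: "is_pos s p \<Longrightarrow> replace_at s p (subt_at s p) = s"
  by (induction rule: is_pos.induct) auto

lemma good_subt: "is_pos s p \<Longrightarrow> good R s \<Longrightarrow> good R (subt_at s p)"
proof (induction rule: is_pos.induct)
  case (root_pos t) then show ?case by simp
next
  case (arg_pos i ts p f)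
  obtain g1 g2 where "f = (g1, g2)" by fastforce
  with arg_pos show ?case by auto
qed

lemma good_replace: "is_pos s p \<Longrightarrow> good R s \<Longrightarrow> good R u \<Longrightarrow> good R (replace_at s p u)"
proof (induction rule: is_pos.induct)
  case (root_pos t) then show ?case by simp
next
  case (arg_pos i ts p f)
  obtain g1 g2 where "f = (g1, g2)" by fastforce
  with arg_pos show ?case by (auto dest!: set_update_subset_insert[THEN subsetD])
qed

fun lsize :: "('f \<times> 'q set option, 'v) term \<Rightarrow> nat" where
  "lsize (Var x) = 0"
| "lsize (Fun g ts) = (case snd g of None \<Rightarrow> 0 | Some Q \<Rightarrow> card Q) + sum_list (map lsize ts)"

lemma sum_list_map_upd: "i < length ts \<Longrightarrow>
  sum_list (map f (ts[i := x])) + f (ts ! i) = sum_list (map f ts) + (f x :: nat)"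
  by (induction ts arbitrary: i) (auto split: nat.splits)

lemma lsize_replace: "is_pos s p \<Longrightarrow> lsize u < lsize (subt_at s p) \<Longrightarrow> lsize (replace_at s p u) < lsize s"
proof (induction arbitrary: u rule: is_pos.induct)
  case (root_pos t) then show ?case by simp
next
  case (arg_pos i ts p f)
  then have "lsize (replace_at (ts ! i) p u) < lsize (ts ! i)" by auto
  with sum_list_map_upd[OF arg_pos(1), of lsize "replace_at (ts ! i) p u"] show ?case by auto
qed


lemma cctrs_lhs: "cctrs R \<Longrightarrow> (l, r, cs) \<in> R \<Longrightarrow> \<exists>f ls. l = Fun f ls"
  unfolding cctrs_def by fastforce

lemma rtranclp_label:
  "(\<lambda>x y. cstep R x y \<and> lstep R (label R x) (label R y))\<^sup>*\<^sup>* a b \<Longrightarrow> (lstep R)\<^sup>*\<^sup>* (label R a) (label R b)"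
  by (induction rule: rtranclp_induct) (auto intro: rtranclp.rtrancl_into_rtrancl)

lemma cstep_label: assumes "cctrs R" shows "cstep R s t \<Longrightarrow> lstep R (label R s) (label R t)"
proof (induction rule: cstep.induct)
  case (1 p s l r cs \<sigma>)
  obtain f ls where l: "l = Fun f ls" using cctrs_lhs[OF assms 1(2)] by blast
  have def: "defined R f" using 1(2) l unfolding defined_def by force
  have mem: "(Fun f ls, r, cs) \<in> rules_of R f" using 1(2) l unfolding rules_of_def by force
  have pos: "is_pos s p" using 1(1) by (simp add: poss_def)
  have "subt_at (label R s) p = label R (subst \<sigma> l)" using 1(3) subt_label[OF pos] by simp
  also have "\<dots> = Fun (f, Some (rules_of R f)) (map (\<lambda>li. subst (label R \<circ> \<sigma>) (label R li)) ls)"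
    using def l by (simp add: label_subst)
  finally have sub: "subt_at (label R s) p = Fun (f, Some (rules_of R f)) (map (\<lambda>li. subst (label R \<circ> \<sigma>) (label R li)) ls)" .
  have conds: "\<forall>i<length cs. (lstep R)\<^sup>*\<^sup>* (subst (label R \<circ> \<sigma>) (label R (fst (cs ! i)))) (subst (label R \<circ> \<sigma>) (label R (snd (cs ! i))))"
    using 1(4) by (auto simp: label_subst[symmetric] intro: rtranclp_label)
  have t: "label R (replace_at s p (subst \<sigma> r)) = replace_at (label R s) p (subst (label R \<circ> \<sigma>) (label R r))"
    using replace_label[OF pos] by (simp add: label_subst)
  show ?case unfolding t
    by (rule lstep.apply_rule[OF _ mem refl sub conds refl]) (use poss_label[OF pos] in \<open>simp add: poss_def\<close>)
qed

lemma cond_sub_label: assumes "cctrs R" "cond_sub R s t" shows "lstep_cond R (label R s) (label R t)"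
proof -
  obtain p l r cs \<sigma> i where p: "p \<in> poss s" and rl: "(l, r, cs) \<in> R" and sb: "subt_at s p = subst \<sigma> l"
    and i: "i < length cs" and c: "\<forall>j < i. (cstep R)\<^sup>*\<^sup>* (subst \<sigma> (fst (cs ! j))) (subst \<sigma> (snd (cs ! j)))"
    and t: "t = subst \<sigma> (fst (cs ! i))"
    using assms(2) unfolding cond_sub_def by blast
  obtain f ls where l: "l = Fun f ls" using cctrs_lhs[OF assms(1) rl] by blast
  have def: "defined R f" using rl l unfolding defined_def by force
  have mem: "(Fun f ls, r, cs) \<in> rules_of R f" using rl l unfolding rules_of_def by force
  have pos: "is_pos s p" using p by (simp add: poss_def)
  have "subt_at (label R s) p = label R (subst \<sigma> l)" using sb subt_label[OF pos] by simp
  also have "\<dots> = Fun (f, Some (rules_of R f)) (map (\<lambda>li. subst (label R \<circ> \<sigma>) (label R li)) ls)"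
    using def l by (simp add: label_subst)
  finally have sub: "subt_at (label R s) p = Fun (f, Some (rules_of R f)) (map (\<lambda>li. subst (label R \<circ> \<sigma>) (label R li)) ls)" .
  have lc: "\<And>a b. cstep R a b \<Longrightarrow> lstep R (label R a) (label R b)" using cstep_label[OF assms(1)] .
  have "\<And>a b. (cstep R)\<^sup>*\<^sup>* a b \<Longrightarrow> (lstep R)\<^sup>*\<^sup>* (label R a) (label R b)"
    subgoal for a b by (induction rule: rtranclp_induct) (auto intro: rtranclp.rtrancl_into_rtrancl lc)
    done
  then have conds: "\<forall>j<i. (lstep R)\<^sup>*\<^sup>* (subst (label R \<circ> \<sigma>) (label R (fst (cs ! j)))) (subst (label R \<circ> \<sigma>) (label R (snd (cs ! j))))"
    using c by (auto simp: label_subst[symmetric])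
  have pl: "p \<in> poss (label R s)" using poss_label[OF pos] by (simp add: poss_def)
  show ?thesis unfolding lstep_cond_def
    apply (rule exI[of _ p], rule exI[of _ "(Fun f ls, r, cs)"], rule exI[of _ "rules_of R f"],
       rule exI[of _ f], rule exI[of _ ls], rule exI[of _ r], rule exI[of _ cs],
       rule exI[of _ "label R \<circ> \<sigma>"], rule exI[of _ i])
    using pl mem sub i conds t by (simp add: label_subst)
qed

lemma dir1: assumes "cctrs R" "\<not> quasi_decreasing R s" shows "lstep_inf R (label R s)"
proof -
  obtain u where u0: "u 0 = s" and us: "\<forall>i. cstep R (u i) (u (Suc i)) \<or> cond_sub R (u i) (u (Suc i))"
    using assms(2) unfolding quasi_decreasing_def infinite_seq_from_def by blast
  show ?thesis unfolding lstep_inf_def infinite_seq_from_def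
    by (rule exI[of _ "label R \<circ> u"]) (use u0 us cstep_label[OF assms(1)] cond_sub_label[OF assms(1)] in \<open>auto; blast\<close>)
qed


lemma cctrs_vars: assumes "cctrs R" "(l, r, cs) \<in> R"
  shows "vars r \<subseteq> vars l \<union> (\<Union>(a, b) \<in> set cs. vars b)"
    "\<forall>i < length cs. vars (fst (cs ! i)) \<subseteq> vars l \<union> (\<Union>j < i. vars (snd (cs ! j)))"
  using assms unfolding cctrs_def by fastforce+

lemma removal:
  assumes "is_pos s p" "subt_at s p = Fun (f, Some Q) ss" "\<rho> \<in> Q" "good R s"
    "t = replace_at s p (Fun (f, Some (Q - {\<rho>})) ss)"
  shows "good R t \<and> erase s = erase t \<and> lsize t < lsize s"
proof -
  have g: "good R (Fun (f, Some Q) ss)" using good_subt[OF assms(1,4)] assms(2) by simp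
  then have fin: "finite Q" by simp
  have "good R (Fun (f, Some (Q - {\<rho>})) ss)" using g by auto
  then have "good R t" using assms(5) good_replace[OF assms(1,4)] by auto
  moreover have "erase s = erase t"
  proof -
    have "erase t = replace_at (erase s) p (Fun f (map erase ss))"
      using assms(5) replace_erase[OF assms(1)] by simp
    also have "\<dots> = replace_at (erase s) p (subt_at (erase s) p)"
      using subt_erase[OF assms(1)] assms(2) by simp
    also have "\<dots> = erase s" using replace_subt[OF poss_erase[OF assms(1)]] .
    finally show ?thesis by simp
  qed
  moreover have "lsize t < lsize s"
    unfolding assms(5) by (rule lsize_replace[OF assms(1)])
      (use assms(2,3) fin card_gt_0_iff[of Q] in \<open>auto\<close>)
  ultimately show ?thesis by blast
qed

lemma good_cond_lhs:
  assumes "cctrs R" "semi_finite R" "(Fun f ls, r, cs) \<in> R"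
    "\<forall>x \<in> vars (Fun f ls). good R (\<sigma> x)" "i < length cs"
    "\<forall>j<i. \<forall>x\<in>vars (snd (cs ! j)). good R (\<sigma> x)"
  shows "good R (subst \<sigma> (label R (fst (cs ! i))))"
  using cctrs_vars(2)[OF assms(1,3)] assms(4-6) good_label[OF assms(2)]
  unfolding good_subst by auto blast

lemma cond_chain:
  assumes "cctrs R" "semi_finite R" "(Fun f ls, r, cs) \<in> R"
    "\<forall>x \<in> vars (Fun f ls). good R (\<sigma> x)"
    "\<And>a b. Rel a b \<Longrightarrow> good R a \<Longrightarrow> good R b"
  shows "k \<le> length cs \<Longrightarrow> \<forall>i<k. Rel (subst \<sigma> (label R (fst (cs ! i)))) (subst \<sigma> (label R (snd (cs ! i))))
    \<Longrightarrow> \<forall>i<k. \<forall>x\<in>vars (snd (cs ! i)). good R (\<sigma> x)"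
proof (induction k)
  case 0 then show ?case by simp
next
  case (Suc k)
  then have ih: "\<forall>i<k. \<forall>x\<in>vars (snd (cs ! i)). good R (\<sigma> x)" by auto
  have "good R (subst \<sigma> (label R (fst (cs ! k))))"
    by (rule good_cond_lhs[OF assms(1-4)]) (use Suc ih in auto)
  then have "good R (subst \<sigma> (label R (snd (cs ! k))))" using assms(5) Suc by auto
  then have "\<forall>x\<in>vars (snd (cs ! k)). good R (\<sigma> x)" by (simp add: good_subst)
  with ih show ?case using less_Suc_eq by auto
qed

lemma rtr_aux:
  "(\<lambda>x y. L x y \<and> (good R x \<longrightarrow> good R y \<and> (cstep R (erase x) (erase y) \<or> (erase x = erase y \<and> Z x y))))\<^sup>*\<^sup>* a b
   \<Longrightarrow> good R a \<Longrightarrow> good R b \<and> (cstep R)\<^sup>*\<^sup>* (erase a) (erase b)"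
  by (induction rule: rtranclp_induct) (auto intro: rtranclp.rtrancl_into_rtrancl)

lemma lstep_main: assumes cc: "cctrs R" and sf: "semi_finite R"
  shows "lstep R s t \<Longrightarrow> good R s \<Longrightarrow> good R t \<and> (cstep R (erase s) (erase t) \<or> (erase s = erase t \<and> lsize t < lsize s))"
proof (induction rule: lstep.induct)
  case (remove_nonunif p s f Q ss \<rho> l r cs us \<sigma> t)
  then show ?case using removal[of s p f Q ss \<rho> R t] by (simp add: poss_def)
next
  case (remove_failed_cond p s \<rho> Q f ls r cs \<sigma> j \<tau> u t)
  then show ?case using removal[of s p f Q _ \<rho> R t] by (simp add: poss_def)
next
  case (apply_rule p s \<rho> Q f ls r cs \<sigma> t)
  have pos: "is_pos s p" using apply_rule(1) by (simp add: poss_def)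
  have gsub: "good R (Fun (f, Some Q) (map (\<lambda>li. subst \<sigma> (label R li)) ls))"
    using good_subt[OF pos apply_rule(7)] apply_rule(4) by simp
  then have inR: "(Fun f ls, r, cs) \<in> R" using apply_rule(2,3) by auto
  have gl: "\<forall>x \<in> vars (Fun f ls). good R (\<sigma> x)" using gsub by (auto simp: good_subst)
  let ?Rel = "(\<lambda>x y. lstep R x y \<and> (good R x \<longrightarrow> good R y \<and> (cstep R (erase x) (erase y) \<or> (erase x = erase y \<and> lsize y < lsize x))))\<^sup>*\<^sup>*"
  have pres: "\<And>a b. ?Rel a b \<Longrightarrow> good R a \<Longrightarrow> good R b"
    using rtr_aux[where Z = "\<lambda>x y. lsize y < lsize x"] by blast
  have gb: "\<forall>i<length cs. \<forall>x\<in>vars (snd (cs ! i)). good R (\<sigma> x)"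
    by (rule cond_chain[OF cc sf inR gl, of ?Rel, OF pres]) (use apply_rule(6) in auto)
  have "\<forall>x\<in>vars r. good R (\<sigma> x)"
  proof
    fix x assume "x \<in> vars r"
    then have "x \<in> vars (Fun f ls) \<or> (\<exists>ab \<in> set cs. x \<in> vars (snd ab))"
      using cctrs_vars(1)[OF cc inR] by (fastforce split: prod.splits)
    then show "good R (\<sigma> x)"
    proof
      assume "\<exists>ab \<in> set cs. x \<in> vars (snd ab)"
      then obtain i where "i < length cs" "x \<in> vars (snd (cs ! i))" by (metis in_set_conv_nth)
      then show ?thesis using gb by blast
    qed (use gl in blast)
  qed
  then have gr: "good R (subst \<sigma> (label R r))"
    using good_label[OF sf] by (simp add: good_subst)
  have gt: "good R t" using apply_rule(5) good_replace[OF pos apply_rule(7) gr] by simp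
  have ga: "\<forall>i<length cs. good R (subst \<sigma> (label R (fst (cs ! i))))"
    using good_cond_lhs[OF cc sf inR gl] gb by (meson less_trans)
  have conds: "\<forall>i<length cs. (cstep R)\<^sup>*\<^sup>* (subst (erase \<circ> \<sigma>) (fst (cs ! i))) (subst (erase \<circ> \<sigma>) (snd (cs ! i)))"
  proof (intro allI impI)
    fix i assume i: "i < length cs"
    have "(cstep R)\<^sup>*\<^sup>* (erase (subst \<sigma> (label R (fst (cs ! i))))) (erase (subst \<sigma> (label R (snd (cs ! i)))))"
      using rtr_aux[where Z = "\<lambda>x y. lsize y < lsize x", OF apply_rule(6)[rule_format, OF i] ga[rule_format, OF i]] by blast
    then show "(cstep R)\<^sup>*\<^sup>* (subst (erase \<circ> \<sigma>) (fst (cs ! i))) (subst (erase \<circ> \<sigma>) (snd (cs ! i)))"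
      by (simp add: erase_subst)
  qed
  have se: "subt_at (erase s) p = subst (erase \<circ> \<sigma>) (Fun f ls)"
    using subt_erase[OF pos] apply_rule(4) by (simp add: erase_subst)
  have te: "erase t = replace_at (erase s) p (subst (erase \<circ> \<sigma>) r)"
    using apply_rule(5) replace_erase[OF pos] by (simp add: erase_subst)
  have "cstep R (erase s) (erase t)" unfolding te
    by (rule cstep.intros[OF _ inR se conds]) (use poss_erase[OF pos] in \<open>simp add: poss_def\<close>)
  with gt show ?case by blast
qed


lemma lsteps_main: assumes cc: "cctrs R" and sf: "semi_finite R"
  shows "(lstep R)\<^sup>*\<^sup>* s t \<Longrightarrow> good R s \<Longrightarrow> good R t \<and> (cstep R)\<^sup>*\<^sup>* (erase s) (erase t)"
proof (induction rule: rtranclp_induct)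
  case base then show ?case by simp
next
  case (step y z)
  then have gy: "good R y" and cy: "(cstep R)\<^sup>*\<^sup>* (erase s) (erase y)" by auto
  from lstep_main[OF cc sf step(2) gy] cy show ?case by (auto intro: rtranclp.rtrancl_into_rtrancl)
qed

lemma lstep_cond_main: assumes cc: "cctrs R" and sf: "semi_finite R"
  and st: "lstep_cond R s t" and gs: "good R s"
  shows "good R t \<and> cond_sub R (erase s) (erase t)"
proof -
  obtain p \<rho> Q f ls r cs \<sigma> j where p: "p \<in> poss s" and rq: "\<rho> \<in> Q" and rho: "\<rho> = (Fun f ls, r, cs)"
    and sb: "subt_at s p = Fun (f, Some Q) (map (\<lambda>li. subst \<sigma> (label R li)) ls)"
    and j: "j < length cs"
    and c: "\<forall>i < j. (lstep R)\<^sup>*\<^sup>* (subst \<sigma> (label R (fst (cs ! i)))) (subst \<sigma> (label R (snd (cs ! i))))"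
    and t: "t = subst \<sigma> (label R (fst (cs ! j)))"
    using st unfolding lstep_cond_def by blast
  have pos: "is_pos s p" using p by (simp add: poss_def)
  have gsub: "good R (Fun (f, Some Q) (map (\<lambda>li. subst \<sigma> (label R li)) ls))"
    using good_subt[OF pos gs] sb by simp
  then have inR: "(Fun f ls, r, cs) \<in> R" using rq rho by auto
  have gl: "\<forall>x \<in> vars (Fun f ls). good R (\<sigma> x)" using gsub by (auto simp: good_subst)
  have pres: "\<And>a b. (lstep R)\<^sup>*\<^sup>* a b \<Longrightarrow> good R a \<Longrightarrow> good R b" using lsteps_main[OF cc sf] by blast
  have gb: "\<forall>i<j. \<forall>x\<in>vars (snd (cs ! i)). good R (\<sigma> x)"
    by (rule cond_chain[OF cc sf inR gl, of "(lstep R)\<^sup>*\<^sup>*", OF pres]) (use j c in auto)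
  have gt: "good R t" unfolding t by (rule good_cond_lhs[OF cc sf inR gl j gb])
  have conds: "\<forall>i<j. (cstep R)\<^sup>*\<^sup>* (subst (erase \<circ> \<sigma>) (fst (cs ! i))) (subst (erase \<circ> \<sigma>) (snd (cs ! i)))"
  proof (intro allI impI)
    fix i assume i: "i < j"
    have ga: "good R (subst \<sigma> (label R (fst (cs ! i))))"
      by (rule good_cond_lhs[OF cc sf inR gl]) (use i j gb in \<open>auto dest: less_trans\<close>)
    have "(cstep R)\<^sup>*\<^sup>* (erase (subst \<sigma> (label R (fst (cs ! i))))) (erase (subst \<sigma> (label R (snd (cs ! i)))))"
      using lsteps_main[OF cc sf c[rule_format, OF i] ga] by blast
    then show "(cstep R)\<^sup>*\<^sup>* (subst (erase \<circ> \<sigma>) (fst (cs ! i))) (subst (erase \<circ> \<sigma>) (snd (cs ! i)))"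
      by (simp add: erase_subst)
  qed
  have se: "subt_at (erase s) p = subst (erase \<circ> \<sigma>) (Fun f ls)"
    using subt_erase[OF pos] sb by (simp add: erase_subst)
  have pe: "p \<in> poss (erase s)" using poss_erase[OF pos] by (simp add: poss_def)
  have te: "erase t = subst (erase \<circ> \<sigma>) (fst (cs ! j))" using t by (simp add: erase_subst)
  have "cond_sub R (erase s) (erase t)" unfolding cond_sub_def
    using pe inR se j conds te by blast
  with gt show ?thesis by blast
qed

lemma dir2: assumes cc: "cctrs R" and sf: "semi_finite R" and inf: "lstep_inf R (label R s)"
  shows "\<not> quasi_decreasing R s"
proof -
  obtain u where u0: "u 0 = label R s" and us: "\<forall>i. lstep R (u i) (u (Suc i)) \<or> lstep_cond R (u i) (u (Suc i))"
    using inf unfolding lstep_inf_def infinite_seq_from_def by blast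
  let ?S = "\<lambda>x y. cstep R x y \<or> cond_sub R x y"
  have gu: "good R (u i)" for i
  proof (induction i)
    case 0 then show ?case using u0 good_label[OF sf] by simp
  next
    case (Suc i) then show ?case using us lstep_main[OF cc sf] lstep_cond_main[OF cc sf] by blast
  qed
  have step: "?S (erase (u i)) (erase (u (Suc i))) \<or> (erase (u i) = erase (u (Suc i)) \<and> lsize (u (Suc i)) < lsize (u i))" for i
    using us gu lstep_main[OF cc sf] lstep_cond_main[OF cc sf] by blast
  have ex: "\<exists>j. ?S (erase (u j)) (erase (u (Suc j))) \<and> erase (u j) = erase (u i)" for i
  proof (induction "lsize (u i)" arbitrary: i rule: less_induct)
    case less
    show ?case
    proof (cases "?S (erase (u i)) (erase (u (Suc i)))")
      case True then show ?thesis by blast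
    next
      case False
      then have "erase (u i) = erase (u (Suc i))" "lsize (u (Suc i)) < lsize (u i)" using step by blast+
      with less[of "Suc i"] show ?thesis by auto
    qed
  qed
  define nxt where "nxt i = (SOME j. ?S (erase (u j)) (erase (u (Suc j))) \<and> erase (u j) = erase (u i))" for i
  have nx: "?S (erase (u (nxt i))) (erase (u (Suc (nxt i)))) \<and> erase (u (nxt i)) = erase (u i)" for i
    unfolding nxt_def using someI_ex[OF ex[of i]] .
  define w where "w k = ((\<lambda>i. Suc (nxt i)) ^^ k) 0" for k
  have "?S (erase (u (w k))) (erase (u (w (Suc k))))" for k
  proof -
    have "w (Suc k) = Suc (nxt (w k))" by (simp add: w_def)
    with nx[of "w k"] show ?thesis by metis
  qed
  moreover have "erase (u (w 0)) = s" by (simp add: w_def u0)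
  ultimately show ?thesis unfolding quasi_decreasing_def infinite_seq_from_def
    apply (simp only: not_not)
    apply (rule exI[of _ "\<lambda>k. erase (u (w k))"])
    by simp
qed


theorem lemma4:
  fixes R :: "('f, 'v) crule set" and s :: "('f, 'v) term"
  assumes "infinite (UNIV :: 'v set)"
    and "cctrs R" and "semi_finite R"
  shows "\<not> quasi_decreasing R s \<longleftrightarrow> lstep_inf R (label R s)"
  using dir1[OF assms(2)] dir2[OF assms(2,3)] by blast

end
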